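(* Fix $N\ge1$, $B>0$, $a_{\max}>0$, and for each $n$: $a_n\ge0$, $\zeta_n\in(0,1]$, $\beta_n\ge0$, integers $\tau_n\ge1$, $D_n\ge1$. Call a pair of vectors $(\mathbf p,\mathbf q)\in[0,1]^N\times[0,1]^N$ admissible if $0\le q_n<p_n\le1$ and $q_n\le a_n/a_{\max}\le p_n$ for all $n$. For admissible $(\mathbf p,\mathbf q)$ let $\phi_I^*(\mathbf p,\mathbf q)=\min_{\lambda\ge0}g_I(\lambda;\mathbf p,\mathbf q)$, where $g_I$ is defined below. Then: (i) for fixed $\mathbf p$, if $(\mathbf p,\mathbf q)$ and $(\mathbf p,\mathbf q')$ are admissible and $\mathbf q\le\mathbf q'$ componentwise, then $\phi_I^*(\mathbf p,\mathbf q)\ge\phi_I^*(\mathbf p,\mathbf q')$; (ii) if $(\mathbf p,\mathbf 0)$ and $(\mathbf p',\mathbf 0)$ are admissible and $\mathbf p\le\mathbf p'$ componentwise, then $\phi_I^*(\mathbf p,\mathbf 0)\le\phi_I^*(\mathbf p',\mathbf 0)$.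
   Context: Put $\tilde a_n=\frac{a_n-a_{\max}q_n}{p_n-q_n}$. For $\lambda\ge0$ and $n$ with $\zeta_n\beta_n>\lambda$, let $c_n(\lambda)=\frac{\lambda}{(\zeta_n\beta_n-\lambda)(1-\zeta_n)^{\tau_n}+\lambda}$ and $v_n(\lambda)=p_n\frac{1-(1-\zeta_n)^{\tau_n}}{\zeta_n}(\zeta_n\beta_n-\lambda)$ if $p_n\le c_n(\lambda)$, and $v_n(\lambda)=-(1-p_n)\frac{1-(1-\zeta_n)^{D_n}}{\zeta_n}\lambda+p_n\frac{1-(1-\zeta_n)^{\tau_n+D_n}}{\zeta_n}(\zeta_n\beta_n-\lambda)$ if $p_n>c_n(\lambda)$. Define $g_I(\lambda;\mathbf p,\mathbf q)=\lambda B+\sum_{n:\ \zeta_n\beta_n>\lambda}\big[\tilde a_n v_n(\lambda)+(a_{\max}-\tilde a_n)q_n\frac{1-(1-\zeta_n)^{\tau_n}}{\zeta_n}(\zeta_n\beta_n-\lambda)\big]$. This is the Lagrange dual function of the weighted timely-throughput problem with static channels, binary resource levels and imperfect prediction with true-positive rates $\mathbf p$ and false-negative rates $\mathbf q$; $\phi_I^*$ is the optimal weighted timely-throughput. *)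

theory Defs
  imports Complex_Main
begin

definition atil :: "real \<Rightarrow> real \<Rightarrow> real \<Rightarrow> real \<Rightarrow> real" where
  "atil an amax pn qn = (an - amax * qn) / (pn - qn)"

definition cthr :: "real \<Rightarrow> real \<Rightarrow> nat \<Rightarrow> real \<Rightarrow> real" where
  "cthr z b t l = l / ((z * b - l) * (1 - z) ^ t + l)"

definition vval :: "real \<Rightarrow> real \<Rightarrow> nat \<Rightarrow> nat \<Rightarrow> real \<Rightarrow> real \<Rightarrow> real" where
  "vval z b t d pn l =
     (if pn \<le> cthr z b t l
      then pn * ((1 - (1 - z) ^ t) / z) * (z * b - l)
      else - (1 - pn) * ((1 - (1 - z) ^ d) / z) * l
           + pn * ((1 - (1 - z) ^ (t + d)) / z) * (z * b - l))"

definition gI :: "nat \<Rightarrow> real \<Rightarrow> real \<Rightarrow> (nat \<Rightarrow> real) \<Rightarrow> (nat \<Rightarrow> real) \<Rightarrow> (nat \<Rightarrow> real)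
    \<Rightarrow> (nat \<Rightarrow> nat) \<Rightarrow> (nat \<Rightarrow> nat) \<Rightarrow> (nat \<Rightarrow> real) \<Rightarrow> (nat \<Rightarrow> real) \<Rightarrow> real \<Rightarrow> real" where
  "gI N B amax a zeta beta tau D p q l =
     l * B + (\<Sum>n\<in>{n. n < N \<and> zeta n * beta n > l}.
        atil (a n) amax (p n) (q n) * vval (zeta n) (beta n) (tau n) (D n) (p n) l
        + (amax - atil (a n) amax (p n) (q n)) * q n
            * ((1 - (1 - zeta n) ^ tau n) / zeta n) * (zeta n * beta n - l))"

definition phiI :: "nat \<Rightarrow> real \<Rightarrow> real \<Rightarrow> (nat \<Rightarrow> real) \<Rightarrow> (nat \<Rightarrow> real) \<Rightarrow> (nat \<Rightarrow> real)
    \<Rightarrow> (nat \<Rightarrow> nat) \<Rightarrow> (nat \<Rightarrow> nat) \<Rightarrow> (nat \<Rightarrow> real) \<Rightarrow> (nat \<Rightarrow> real) \<Rightarrow> real" where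
  "phiI N B amax a zeta beta tau D p q = (INF l\<in>{0..}. gI N B amax a zeta beta tau D p q l)"

definition admissible :: "nat \<Rightarrow> real \<Rightarrow> (nat \<Rightarrow> real) \<Rightarrow> (nat \<Rightarrow> real) \<Rightarrow> (nat \<Rightarrow> real) \<Rightarrow> bool" where
  "admissible N amax a p q \<longleftrightarrow>
     (\<forall>n<N. 0 \<le> q n \<and> q n < p n \<and> p n \<le> 1 \<and> q n \<le> a n / amax \<and> a n / amax \<le> p n)"

end

theory Submission
  imports Defs
begin


lemma vmax:
  fixes z b l p :: real and t d :: nat
  assumes z: "0 < z" "z \<le> 1" and l: "0 \<le> l" "l < z*b"
  shows "vval z b t d p l = max (p*((1 - (1 - z) ^ t) / z)*(z*b-l))
     (- (1 - p) * ((1 - (1 - z) ^ d) / z) * l + p * ((1 - (1 - z) ^ (t + d)) / z) * (z * b - l))"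
proof -
  define KD where "KD = (1 - (1 - z) ^ d) / z"
  define den where "den = (z*b-l)*(1-z)^t + l"
  have KD: "KD \<ge> 0" unfolding KD_def using z by (auto intro!: divide_nonneg_pos power_le_one)
  have den: "den \<ge> 0" unfolding den_def using z l by auto
  have diff: "(- (1 - p) * ((1 - (1 - z) ^ d) / z) * l + p * ((1 - (1 - z) ^ (t + d)) / z) * (z * b - l))
     - p*((1 - (1 - z) ^ t) / z)*(z*b-l) = KD * (p*den - l)"
    unfolding KD_def den_def using z by (simp add: power_add field_simps)
  have c: "cthr z b t l = l / den" unfolding cthr_def den_def by simp
  show ?thesis
  proof (cases "p \<le> cthr z b t l")
    case True
    have "p*den \<le> l"
    proof (cases "den = 0")
      case True then show ?thesis using den_def z l \<open>p \<le> cthr z b t l\<close> c by auto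
    next
      case False then show ?thesis using den True c by (simp add: le_divide_eq mult.commute)
    qed
    hence "KD * (p*den - l) \<le> 0" using KD by (simp add: mult_nonneg_nonpos)
    then show ?thesis using True diff unfolding vval_def by simp
  next
    case False
    have "p*den \<ge> l"
    proof (cases "den = 0")
      case True
      have "l = 0" using True unfolding den_def using z l
        by (smt (verit) mult_nonneg_nonneg zero_le_power)
      then show ?thesis using True by simp
    next
      case False then have "den > 0" using den by simp
      then show ?thesis using \<open>\<not> p \<le> cthr z b t l\<close> c by (simp add: not_le divide_less_eq mult.commute)
    qed
    hence "KD * (p*den - l) \<ge> 0" using KD by simp
    then show ?thesis using False diff unfolding vval_def by simp
  qed
qed

lemma id_q: fixes A M p x V K d :: real assumes "x < p"
  shows "atil A M p x * V + (M - atil A M p x)*x*K*d = M*V + (A-M*p)*K*d + (A-M*p)*(V-p*K*d)/(p-x)"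
proof -
  have ne: "p - x \<noteq> 0" using assms by simp
  have a: "atil A M p x = (A - M*x)/(p-x)" by (simp add: atil_def)
  have "(A-M*p)*(V-p*K*d)/(p-x) = ((A-M*p)*(V-p*K*d))/(p-x)" by simp
  have "atil A M p x * V + (M - atil A M p x)*x*K*d = ((A - M*x)*V + (M*(p-x) - (A - M*x))*x*K*d)/(p-x)"
    unfolding a using ne by (simp add: divide_simps)
  also have "\<dots> = ((M*V + (A-M*p)*K*d)*(p-x) + (A-M*p)*(V-p*K*d))/(p-x)"
    by (rule arg_cong[where f="\<lambda>u. u/(p-x)"]) (simp add: algebra_simps)
  also have "\<dots> = M*V + (A-M*p)*K*d + (A-M*p)*(V-p*K*d)/(p-x)"
    using ne by (simp add: add_divide_distrib)
  finally show ?thesis .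
qed

lemma summ_mono_q:
  fixes A M p q q' V K d :: real
  assumes "M>0" "0\<le>q" "q\<le>q'" "q'<p" "A \<le> M*p" "p*K*d \<le> V"
  shows "atil A M p q' * V + (M - atil A M p q')*q'*K*d \<le> atil A M p q * V + (M - atil A M p q)*q*K*d"
proof -
  have X: "(A-M*p)*(V-p*K*d) \<le> 0" using assms by (simp add: mult_nonpos_nonneg)
  have "(A-M*p)*(V-p*K*d)/(p-q') \<le> (A-M*p)*(V-p*K*d)/(p-q)"
    using X assms by (intro divide_left_mono_neg) auto
  then show ?thesis using id_q[of q p A M V K d] id_q[of q' p A M V K d] assms by simp
qed

lemma summ_mono_p:
  fixes A M p p' :: real and z b l :: real and t d :: nat
  assumes "0 < z" "z \<le> 1" "0 \<le> l" "l < z*b" "0 < p" "p \<le> p'" "0 \<le> A"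
  shows "atil A M p 0 * vval z b t d p l + (M - atil A M p 0)*0*K*e
      \<le> atil A M p' 0 * vval z b t d p' l + (M - atil A M p' 0)*0*K*e"
proof -
  define Kt where "Kt = (1 - (1 - z) ^ t) / z"
  define KD where "KD = (1 - (1 - z) ^ d) / z"
  define Ktd where "Ktd = (1 - (1 - z) ^ (t+d)) / z"
  have KD: "KD \<ge> 0" unfolding KD_def using assms by (auto intro!: divide_nonneg_pos power_le_one)
  have f: "atil A M x 0 * vval z b t d x l = A * max (Kt*(z*b-l)) (- (1/x - 1) * KD * l + Ktd * (z * b - l))"
    if "0 < x" for x
  proof -
    have "atil A M x 0 * vval z b t d x l = A * (vval z b t d x l / x)" unfolding atil_def by simp
    also have "vval z b t d x l / x = max (Kt*(z*b-l)) (- (1/x - 1) * KD * l + Ktd * (z * b - l))"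
    proof -
      have v: "vval z b t d x l = max (x*Kt*(z*b-l)) (- (1 - x) * KD * l + x * Ktd * (z * b - l))"
        unfolding vmax[OF assms(1-4)] Kt_def KD_def Ktd_def by simp
      have e1: "x*Kt*(z*b-l) / x = Kt*(z*b-l)" using that by simp
      have e2: "(- (1 - x) * KD * l + x * Ktd * (z * b - l)) / x = - (1/x - 1) * KD * l + Ktd * (z * b - l)"
        using that by (simp add: field_simps)
      have mx: "max u v / x = max (u/x) (v/x)" for u v
        using that by (auto simp: max_def divide_right_mono divide_le_cancel)
      show ?thesis unfolding v mx e1 e2 by simp
    qed
    finally show ?thesis .
  qed
  have "1/p' - 1 \<le> 1/p - 1" using assms by (simp add: frac_le)
  hence "- (1/p - 1) * KD * l \<le> - (1/p' - 1) * KD * l" using KD assms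
    by (simp add: mult_right_mono)
  hence "max (Kt*(z*b-l)) (- (1/p - 1) * KD * l + Ktd * (z * b - l)) \<le> max (Kt*(z*b-l)) (- (1/p' - 1) * KD * l + Ktd * (z * b - l))"
    by simp
  then show ?thesis using f[of p] f[of p'] assms by (simp add: mult_left_mono)
qed


definition Cb :: "real \<Rightarrow> real \<Rightarrow> real \<Rightarrow> real \<Rightarrow> real \<Rightarrow> real \<Rightarrow> nat \<Rightarrow> nat \<Rightarrow> real \<Rightarrow> real" where
  "Cb A M p q z b t d K = (abs (atil A M p q)) * ((abs (p))*(abs ((1 - (1 - z) ^ t) / z))*(abs (z*b)) + (abs (1-p))*(abs ((1 - (1 - z) ^ d) / z))*(abs (z*b))
      + (abs (p))*(abs ((1 - (1 - z) ^ (t+d)) / z))*(abs (z*b))) + (abs (M - atil A M p q))*(abs (q))*(abs (K))*(abs (z*b))"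

lemma Cb_nonneg: "Cb A M p q z b t d K \<ge> 0" unfolding Cb_def by simp

lemma ab1: fixes X w l :: real assumes "0 \<le> l" "l < w" shows "(abs (X*(w-l))) \<le> (abs (X))*(abs (w))"
  using assms by (simp add: abs_mult mult_left_mono)
lemma ab2: fixes X w l :: real assumes "0 \<le> l" "l < w" shows "(abs (X*l)) \<le> (abs (X))*(abs (w))"
  using assms by (simp add: abs_mult mult_left_mono)

lemma summ_bound:
  fixes A M p q z b l K :: real and t d :: nat
  assumes "0 \<le> l" "l < z*b"
  shows "(abs (atil A M p q * vval z b t d p l + (M - atil A M p q)*q*K*(z*b-l))) \<le> Cb A M p q z b t d K"
proof -
  have v: "(abs (vval z b t d p l)) \<le> (abs (p))*(abs ((1 - (1 - z) ^ t) / z))*(abs (z*b)) + (abs (1-p))*(abs ((1 - (1 - z) ^ d) / z))*(abs (z*b))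
      + (abs (p))*(abs ((1 - (1 - z) ^ (t+d)) / z))*(abs (z*b))"
  proof -
    have h1: "(abs (p * ((1 - (1 - z) ^ t) / z) * (z * b - l))) \<le> (abs (p))*(abs ((1 - (1 - z) ^ t) / z))*(abs (z*b))"
      using ab1[OF assms, of "p * ((1 - (1 - z) ^ t) / z)"] by (simp add: abs_mult)
    have h2: "(abs (- (1 - p) * ((1 - (1 - z) ^ d) / z) * l)) \<le> (abs (1-p))*(abs ((1 - (1 - z) ^ d) / z))*(abs (z*b))"
      using ab2[OF assms, of "(1 - p) * ((1 - (1 - z) ^ d) / z)"]
      unfolding abs_mult[of "1-p" "(1 - (1 - z) ^ d) / z"] by (metis abs_minus_cancel mult_minus_left)
    have h3: "(abs (p * ((1 - (1 - z) ^ (t+d)) / z) * (z * b - l))) \<le> (abs (p))*(abs ((1 - (1 - z) ^ (t+d)) / z))*(abs (z*b))"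
      using ab1[OF assms, of "p * ((1 - (1 - z) ^ (t+d)) / z)"] by (simp add: abs_mult)
    have nn: "0 \<le> (abs (1-p))*(abs ((1 - (1 - z) ^ d) / z))*(abs (z*b))" "0 \<le> (abs (p))*(abs ((1 - (1 - z) ^ (t+d)) / z))*(abs (z*b))"
      by simp_all
    show ?thesis
    proof (cases "p \<le> cthr z b t l")
      case True
      then have "vval z b t d p l = p * ((1 - (1 - z) ^ t) / z) * (z * b - l)" by (simp add: vval_def)
      then show ?thesis using h1 nn by (simp only:)
    next
      case False
      then have "vval z b t d p l = - (1 - p) * ((1 - (1 - z) ^ d) / z) * l + p * ((1 - (1 - z) ^ (t+d)) / z) * (z * b - l)" by (simp add: vval_def)
      then show ?thesis unfolding \<open>vval z b t d p l = _\<close> using h1 h2 h3 nn abs_ge_zero[of "p * ((1 - (1 - z) ^ t) / z) * (z * b - l)"]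
          abs_triangle_ineq[of "- (1 - p) * ((1 - (1 - z) ^ d) / z) * l" "p * ((1 - (1 - z) ^ (t+d)) / z) * (z * b - l)"]
        by linarith
    qed
  qed
  have w: "(abs ((M - atil A M p q)*q*K*(z*b-l))) \<le> (abs (M - atil A M p q))*(abs (q))*(abs (K))*(abs (z*b))"
    using ab1[OF assms, of "(M - atil A M p q)*q*K"] by (simp add: abs_mult)
  have "(abs (atil A M p q * vval z b t d p l)) \<le> (abs (atil A M p q)) * ((abs (p))*(abs ((1 - (1 - z) ^ t) / z))*(abs (z*b)) + (abs (1-p))*(abs ((1 - (1 - z) ^ d) / z))*(abs (z*b))
      + (abs (p))*(abs ((1 - (1 - z) ^ (t+d)) / z))*(abs (z*b)))"
    unfolding abs_mult[of "atil A M p q" "vval z b t d p l"] by (rule mult_left_mono[OF v]) simp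
  then show ?thesis unfolding Cb_def using w abs_triangle_ineq[of "atil A M p q * vval z b t d p l" "(M - atil A M p q)*q*K*(z*b-l)"]
    by linarith
qed

lemma gI_bdd:
  assumes "B \<ge> 0"
  shows "bdd_below (gI N B amax a zeta beta tau D p q ` {0..})"
proof (rule bdd_belowI2)
  fix l :: real assume l: "l \<in> {0..}"
  let ?S = "{n. n < N \<and> zeta n * beta n > l}"
  let ?C = "\<lambda>n. Cb (a n) amax (p n) (q n) (zeta n) (beta n) (tau n) (D n) ((1 - (1 - zeta n) ^ tau n) / zeta n)"
  have "- (\<Sum>n<N. ?C n) \<le> - (\<Sum>n\<in>?S. ?C n)"
    by (simp, rule sum_mono2) (auto simp: Cb_nonneg)
  also have "- (\<Sum>n\<in>?S. ?C n) = (\<Sum>n\<in>?S. - ?C n)" by (simp add: sum_negf)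
  also have "\<dots> \<le> (\<Sum>n\<in>?S. atil (a n) amax (p n) (q n) * vval (zeta n) (beta n) (tau n) (D n) (p n) l
        + (amax - atil (a n) amax (p n) (q n)) * q n
            * ((1 - (1 - zeta n) ^ tau n) / zeta n) * (zeta n * beta n - l))"
  proof (rule sum_mono)
    fix n assume "n \<in> ?S"
    then have "0 \<le> l" "l < zeta n * beta n" using l by auto
    from summ_bound[OF this, of "a n" amax "p n" "q n" "tau n" "D n" "(1 - (1 - zeta n) ^ tau n) / zeta n"]
    show "- ?C n \<le> atil (a n) amax (p n) (q n) * vval (zeta n) (beta n) (tau n) (D n) (p n) l + (amax - atil (a n) amax (p n) (q n)) * q n * ((1 - (1 - zeta n) ^ tau n) / zeta n) * (zeta n * beta n - l)" by linarith
  qed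
  also have "\<dots> \<le> gI N B amax a zeta beta tau D p q l" unfolding gI_def using l assms by simp
  finally show "- (\<Sum>n<N. ?C n) \<le> gI N B amax a zeta beta tau D p q l" .
qed


theorem theorem5:
  fixes N :: nat and B amax :: real and a zeta beta :: "nat \<Rightarrow> real" and tau D :: "nat \<Rightarrow> nat"
  assumes "N \<ge> 1" and "B > 0" and "amax > 0"
    and "\<And>n. n < N \<Longrightarrow> a n \<ge> 0"
    and "\<And>n. n < N \<Longrightarrow> 0 < zeta n \<and> zeta n \<le> 1"
    and "\<And>n. n < N \<Longrightarrow> beta n \<ge> 0"
    and "\<And>n. n < N \<Longrightarrow> tau n \<ge> 1"
    and "\<And>n. n < N \<Longrightarrow> D n \<ge> 1"
  shows "(\<forall>p q q'. admissible N amax a p q \<and> admissible N amax a p q' \<and> (\<forall>n<N. q n \<le> q' n)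
            \<longrightarrow> phiI N B amax a zeta beta tau D p q \<ge> phiI N B amax a zeta beta tau D p q')
       \<and> (\<forall>p p'. admissible N amax a p (\<lambda>_. 0) \<and> admissible N amax a p' (\<lambda>_. 0) \<and> (\<forall>n<N. p n \<le> p' n)
            \<longrightarrow> phiI N B amax a zeta beta tau D p (\<lambda>_. 0) \<le> phiI N B amax a zeta beta tau D p' (\<lambda>_. 0))"
proof -
  have B0: "B \<ge> 0" using assms by simp
  have P1: "phiI N B amax a zeta beta tau D p q' \<le> phiI N B amax a zeta beta tau D p q"
    if adm: "admissible N amax a p q" "admissible N amax a p q'" and qq: "\<forall>n<N. q n \<le> q' n" for p q q'
    unfolding phiI_def
  proof (rule cINF_mono)
    show "{0::real..} \<noteq> {}" by auto
    show "bdd_below (gI N B amax a zeta beta tau D p q' ` {0..})" by (rule gI_bdd[OF B0])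
    fix l :: real assume l: "l \<in> {0..}"
    have "gI N B amax a zeta beta tau D p q' l \<le> gI N B amax a zeta beta tau D p q l"
      unfolding gI_def
    proof (rule add_left_mono, rule sum_mono)
      fix n assume n: "n \<in> {n. n < N \<and> zeta n * beta n > l}"
      have z: "0 < zeta n" "zeta n \<le> 1" using assms(5) n by auto
      have l0: "0 \<le> l" "l < zeta n * beta n" using l n by auto
      have a1: "0 \<le> q n" "q n \<le> q' n" "q' n < p n" "a n / amax \<le> p n"
        using adm qq n unfolding admissible_def by auto
      have ap: "a n \<le> amax * p n" using a1(4) assms(3) by (simp add: pos_divide_le_eq mult.commute)
      have V: "p n * ((1 - (1 - zeta n) ^ tau n) / zeta n) * (zeta n * beta n - l) \<le> vval (zeta n) (beta n) (tau n) (D n) (p n) l"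
        unfolding vmax[OF z l0] by simp
      show "atil (a n) amax (p n) (q' n) * vval (zeta n) (beta n) (tau n) (D n) (p n) l +
          (amax - atil (a n) amax (p n) (q' n)) * q' n * ((1 - (1 - zeta n) ^ tau n) / zeta n) * (zeta n * beta n - l)
          \<le> atil (a n) amax (p n) (q n) * vval (zeta n) (beta n) (tau n) (D n) (p n) l +
          (amax - atil (a n) amax (p n) (q n)) * q n * ((1 - (1 - zeta n) ^ tau n) / zeta n) * (zeta n * beta n - l)"
        by (rule summ_mono_q[OF assms(3) a1(1-3) ap V])
    qed
    then show "\<exists>m\<in>{0..}. gI N B amax a zeta beta tau D p q' m \<le> gI N B amax a zeta beta tau D p q l"
      using l by blast
  qed
  have P2: "phiI N B amax a zeta beta tau D p (\<lambda>_. 0) \<le> phiI N B amax a zeta beta tau D p' (\<lambda>_. 0)"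
    if adm: "admissible N amax a p (\<lambda>_. 0)" "admissible N amax a p' (\<lambda>_. 0)" and pp: "\<forall>n<N. p n \<le> p' n" for p p'
    unfolding phiI_def
  proof (rule cINF_mono)
    show "{0::real..} \<noteq> {}" by auto
    show "bdd_below (gI N B amax a zeta beta tau D p (\<lambda>_. 0) ` {0..})" by (rule gI_bdd[OF B0])
    fix l :: real assume l: "l \<in> {0..}"
    have "gI N B amax a zeta beta tau D p (\<lambda>_. 0) l \<le> gI N B amax a zeta beta tau D p' (\<lambda>_. 0) l"
      unfolding gI_def
    proof (rule add_left_mono, rule sum_mono)
      fix n assume n: "n \<in> {n. n < N \<and> zeta n * beta n > l}"
      have z: "0 < zeta n" "zeta n \<le> 1" using assms(5) n by auto
      have l0: "0 \<le> l" "l < zeta n * beta n" using l n by auto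
      have a1: "0 < p n" "p n \<le> p' n" using adm pp n unfolding admissible_def by auto
      have a0: "0 \<le> a n" using assms(4) n by auto
      show "atil (a n) amax (p n) 0 * vval (zeta n) (beta n) (tau n) (D n) (p n) l +
          (amax - atil (a n) amax (p n) 0) * 0 * ((1 - (1 - zeta n) ^ tau n) / zeta n) * (zeta n * beta n - l)
          \<le> atil (a n) amax (p' n) 0 * vval (zeta n) (beta n) (tau n) (D n) (p' n) l +
          (amax - atil (a n) amax (p' n) 0) * 0 * ((1 - (1 - zeta n) ^ tau n) / zeta n) * (zeta n * beta n - l)"
        by (rule summ_mono_p[OF z l0 a1 a0])
    qed
    then show "\<exists>m\<in>{0..}. gI N B amax a zeta beta tau D p (\<lambda>_. 0) m \<le> gI N B amax a zeta beta tau D p' (\<lambda>_. 0) l"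
      using l by blast
  qed
  show ?thesis using P1 P2 by blast
qed

end
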